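(* Let $Y$ be a latent label taking one of two values $y_1, y_2$ in a label space $\mathcal{Y}$, with known class probability $p = P(Y = y_1)$, and let $g:\mathcal{Y}\to\{\pm1\}^d$ be an isometric injective embedding. Let $\lambda^a,\lambda^b,\lambda^c$ be any three labeling functions (random elements of $\mathcal{Y}$) that are conditionally independent given $Y$, and suppose $n$ i.i.d. samples of $(\lambda^a,\lambda^b,\lambda^c)$ are observed ($Y$ is not observed). Assume the signs (i.e. the correct root of the quadratic) can be correctly recovered. Then for any $\delta>0$, with probability at least $1-\delta$, the quadratic triplet method recovers $\alpha_i = P(g(\lambda^a)_i=1\mid Y=y)$, $\beta_i = P(g(\lambda^b)_i=1\mid Y=y)$, $\gamma_i = P(g(\lambda^c)_i=1\mid Y=y)$ up to error $O\big((\ln(2d^2/\delta)/(2n))^{1/4}\big)$, simultaneously for all $i\in[d]$.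
   Context: Quadratic triplet method: for each coordinate $i\in[d]$, form the empirical frequencies $\hat O_{a,b}=\hat P(g(\lambda^a)_i=1,g(\lambda^b)_i=1)$, $\hat O_{a,c}$, $\hat O_{b,c}$ (defined analogously) and $\hat\ell_a=\hat P(g(\lambda^a)_i=1)$, $\hat\ell_b$, $\hat\ell_c$ from the $n$ samples. By conditional independence, the population quantities satisfy, with $y$ one of the two label values and $p'=P(Y=y)$, the system $O_{u,v} = p'\,\alpha^u\alpha^v + (1-p')\,\frac{\ell_u - p'\alpha^u}{1-p'}\cdot\frac{\ell_v-p'\alpha^v}{1-p'}$ for the three pairs $(u,v)\in\{(a,b),(a,c),(b,c)\}$, where $\alpha^a=\alpha_i,\alpha^b=\beta_i,\alpha^c=\gamma_i$ (using $P(g(\lambda^u)_i=1\mid Y\neq y)=(\ell_u-p'\alpha^u)/(1-p')$). The method plugs the empirical quantities into this system, eliminates two unknowns to obtain a single quadratic equation in one unknown, solves it by the quadratic formula (choosing the correct root), and back-substitutes to obtain estimates of $\alpha_i,\beta_i,\gamma_i$. *)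

theory Defs
  imports "HOL-Probability.Probability"
begin

text \<open>One draw of the generative model is a tuple (Y, lambda_a, lambda_b, lambda_c)
  of the latent label and the outputs of the three labeling functions.\<close>

definition lat :: "'y \<times> 'y \<times> 'y \<times> 'y \<Rightarrow> 'y" where
  "lat s = fst s"
definition lab_a :: "'y \<times> 'y \<times> 'y \<times> 'y \<Rightarrow> 'y" where
  "lab_a s = fst (snd s)"
definition lab_b :: "'y \<times> 'y \<times> 'y \<times> 'y \<Rightarrow> 'y" where
  "lab_b s = fst (snd (snd s))"
definition lab_c :: "'y \<times> 'y \<times> 'y \<times> 'y \<Rightarrow> 'y" where
  "lab_c s = snd (snd (snd s))"

text \<open>Hamming distance on {+-1}^d, vectors represented as nat => int on coordinates < d.\<close>
definition hamming :: "nat \<Rightarrow> (nat \<Rightarrow> int) \<Rightarrow> (nat \<Rightarrow> int) \<Rightarrow> nat" where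
  "hamming d u v = card {i. i < d \<and> u i \<noteq> v i}"

definition cond_indep3 :: "('y \<times> 'y \<times> 'y \<times> 'y) pmf \<Rightarrow> bool" where
  "cond_indep3 D \<longleftrightarrow> (\<forall>y a b c.
     pmf D (y, a, b, c) * (pmf (map_pmf lat D) y)^2 =
       pmf (map_pmf (\<lambda>s. (lat s, lab_a s)) D) (y, a) *
       pmf (map_pmf (\<lambda>s. (lat s, lab_b s)) D) (y, b) *
       pmf (map_pmf (\<lambda>s. (lat s, lab_c s)) D) (y, c))"

definition cprob :: "('y \<times> 'y \<times> 'y \<times> 'y) pmf \<Rightarrow> 'y \<Rightarrow> ('y \<times> 'y \<times> 'y \<times> 'y \<Rightarrow> bool) \<Rightarrow> real" where
  "cprob D y P = measure_pmf.prob D {s. lat s = y \<and> P s} / measure_pmf.prob D {s. lat s = y}"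

definition emp :: "nat \<Rightarrow> (nat \<Rightarrow> bool) \<Rightarrow> real" where
  "emp n P = real (card {j. j < n \<and> P j}) / real n"

text \<open>The quadratic triplet method at coordinate i, from the n observed triples
  obs j = (lambda_a, lambda_b, lambda_c) of the j-th sample, with known p' = P(Y = y),
  and the correct root selected by the sign sg (the sign of alpha_i - l_a).
  Plugging the empirical quantities into the system
  O_uv = p' a_u a_v + (l_u - p' a_u)(l_v - p' a_v)/(1-p'), i.e.
  O_uv - l_u l_v = r (a_u - l_u)(a_v - l_v) with r = p'/(1-p'),
  eliminating a_b, a_c gives the quadratic (a_a - l_a)^2 = C_ab C_ac / (r C_bc)
  in a_a; its root (real part, if the discriminant is negative) with the chosen sign is
  taken, and a_b, a_c are obtained by back-substitution.\<close>
definition triplet_est ::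
  "('y \<Rightarrow> nat \<Rightarrow> int) \<Rightarrow> real \<Rightarrow> nat \<Rightarrow> (nat \<Rightarrow> 'y \<times> 'y \<times> 'y) \<Rightarrow> nat \<Rightarrow> real
     \<Rightarrow> real \<times> real \<times> real" where
  "triplet_est g p' n obs i sg =
    (let la = emp n (\<lambda>j. g (fst (obs j)) i = 1);
         lb = emp n (\<lambda>j. g (fst (snd (obs j))) i = 1);
         lc = emp n (\<lambda>j. g (snd (snd (obs j))) i = 1);
         Oab = emp n (\<lambda>j. g (fst (obs j)) i = 1 \<and> g (fst (snd (obs j))) i = 1);
         Oac = emp n (\<lambda>j. g (fst (obs j)) i = 1 \<and> g (snd (snd (obs j))) i = 1);
         Obc = emp n (\<lambda>j. g (fst (snd (obs j))) i = 1 \<and> g (snd (snd (obs j))) i = 1);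
         Cab = Oab - la * lb;
         Cac = Oac - la * lc;
         Cbc = Obc - lb * lc;
         r = p' / (1 - p');
         K = Cab * Cac / (r * Cbc);
         xa = sg * sqrt (max 0 K);
         xb = Cab / (r * xa);
         xc = Cac / (r * xa)
     in (la + xa, lb + xb, lc + xc))"

end

theory Submission
  imports Defs
begin


lemma map_bernoulli:
  "map_pmf E D = bernoulli_pmf (measure_pmf.prob D {s. E s})"
proof (rule pmf_eqI)
  fix b :: bool
  have "measure_pmf.prob D {s. \<not> E s} = 1 - measure_pmf.prob D {s. E s}"
    using measure_pmf.prob_compl[of "{s. E s}" D] by (simp add: set_diff_eq)
  then show "pmf (map_pmf E D) b = pmf (bernoulli_pmf (measure_pmf.prob D {s. E s})) b"
    by (cases b) (auto simp: pmf_map vimage_def)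
qed

lemma hoeff_event:
  fixes D :: "'a pmf" and E :: "'a \<Rightarrow> bool" and n :: nat and \<epsilon> :: real
  assumes n: "n > 0" and e: "\<epsilon> \<ge> 0"
  shows "measure_pmf.prob (Pi_pmf {..<n} dflt (\<lambda>_. D))
     {S. \<epsilon> \<le> \<bar>real (card {j. j < n \<and> E (S j)}) / real n - measure_pmf.prob D {s. E s}\<bar>}
     \<le> 2 * exp (- 2 * real n * \<epsilon>^2)"
proof -
  define q where "q = measure_pmf.prob D {s. E s}"
  have q: "q \<in> {0..1}" unfolding q_def by auto
  have "Pi_pmf {..<n} (E dflt) (\<lambda>_. map_pmf E D) = map_pmf ((\<circ>) E) (Pi_pmf {..<n} dflt (\<lambda>_. D))"
    by (rule Pi_pmf_map) auto
  hence eq1: "map_pmf ((\<circ>) E) (Pi_pmf {..<n} dflt (\<lambda>_. D)) = Pi_pmf {..<n} (E dflt) (\<lambda>_. bernoulli_pmf q)"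
    by (simp add: map_bernoulli q_def)
  have eq2: "binomial_pmf n q = map_pmf (\<lambda>f. card {x \<in> {..<n}. f x}) (Pi_pmf {..<n} (E dflt) (\<lambda>_. bernoulli_pmf q))"
    by (rule binomial_pmf_altdef') (use q in auto)
  have "measure_pmf.prob (Pi_pmf {..<n} dflt (\<lambda>_. D))
     {S. \<epsilon> \<le> \<bar>real (card {j. j < n \<and> E (S j)}) / real n - q\<bar>}
     = measure_pmf.prob (map_pmf (\<lambda>f. card {x \<in> {..<n}. f x}) (map_pmf ((\<circ>) E) (Pi_pmf {..<n} dflt (\<lambda>_. D))))
        {x. \<epsilon> \<le> \<bar>real x / real n - q\<bar>}"
    by (simp add: vimage_def o_def)
  also have "\<dots> = measure_pmf.prob (binomial_pmf n q) {x. \<epsilon> \<le> \<bar>real x / real n - q\<bar>}"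
    by (simp only: eq1 eq2)
  also have "\<dots> \<le> 2 * exp (real_of_int (- 2 * int n) * \<epsilon>\<^sup>2)"
    by (rule binomial_distribution.prob_abs_ge') (use q n e in \<open>auto simp: binomial_distribution_def\<close>)
  finally show ?thesis by (simp add: q_def)
qed


definition tracks :: "'z set \<Rightarrow> ('z \<Rightarrow> real) \<Rightarrow> real \<Rightarrow> ('z \<Rightarrow> real) \<Rightarrow> bool" where
  "tracks Z X x E \<longleftrightarrow> (\<exists>M e1. M \<ge> 0 \<and> e1 > 0 \<and> (\<forall>z\<in>Z. E z \<le> e1 \<longrightarrow> \<bar>X z - x\<bar> \<le> M * E z))"

lemma tr_base: "(\<And>z. z \<in> Z \<Longrightarrow> \<bar>X z - x\<bar> \<le> E z) \<Longrightarrow> tracks Z X x E"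
  unfolding tracks_def by (rule exI[of _ 1], rule exI[of _ 1]) auto

lemma tr_const: "(\<And>z. z \<in> Z \<Longrightarrow> E z \<ge> 0) \<Longrightarrow> tracks Z (\<lambda>_. c) c E"
  unfolding tracks_def by (rule exI[of _ 0], rule exI[of _ 1]) auto

lemma tr_eq: "tracks Z X x E \<Longrightarrow> x = y \<Longrightarrow> tracks Z X y E" by simp

lemma tr_add:
  assumes "tracks Z X x E" "tracks Z Y y E"
  shows "tracks Z (\<lambda>z. X z + Y z) (x + y) E"
proof -
  from assms obtain M1 e1 M2 e2 where a: "M1 \<ge> 0" "e1 > 0" "\<forall>z\<in>Z. E z \<le> e1 \<longrightarrow> \<bar>X z - x\<bar> \<le> M1 * E z"
    and b: "M2 \<ge> 0" "e2 > 0" "\<forall>z\<in>Z. E z \<le> e2 \<longrightarrow> \<bar>Y z - y\<bar> \<le> M2 * E z"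
    unfolding tracks_def by blast
  show ?thesis unfolding tracks_def
  proof (intro exI conjI ballI impI)
    fix z assume z: "z \<in> Z" "E z \<le> min e1 e2"
    have "\<bar>X z + Y z - (x + y)\<bar> \<le> \<bar>X z - x\<bar> + \<bar>Y z - y\<bar>" by linarith
    also have "\<dots> \<le> M1 * E z + M2 * E z" using a b z by (intro add_mono) auto
    finally show "\<bar>X z + Y z - (x + y)\<bar> \<le> (M1 + M2) * E z" by (simp add: algebra_simps)
  qed (use a b in auto)
qed

lemma tr_neg:
  assumes "tracks Z X x E"
  shows "tracks Z (\<lambda>z. - X z) (- x) E"
proof -
  have "\<bar>- X z - - x\<bar> = \<bar>X z - x\<bar>" for z by linarith
  thus ?thesis using assms unfolding tracks_def by simp
qed

lemma tr_diff:
  assumes "tracks Z X x E" "tracks Z Y y E"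
  shows "tracks Z (\<lambda>z. X z - Y z) (x - y) E"
  using tr_add[OF assms(1) tr_neg[OF assms(2)]] by simp

lemma tr_mult:
  assumes "tracks Z X x E" "tracks Z Y y E" and nn: "\<And>z. z \<in> Z \<Longrightarrow> E z \<ge> 0"
  shows "tracks Z (\<lambda>z. X z * Y z) (x * y) E"
proof -
  from assms obtain M1 e1 M2 e2 where a: "M1 \<ge> 0" "e1 > 0" "\<forall>z\<in>Z. E z \<le> e1 \<longrightarrow> \<bar>X z - x\<bar> \<le> M1 * E z"
    and b: "M2 \<ge> 0" "e2 > 0" "\<forall>z\<in>Z. E z \<le> e2 \<longrightarrow> \<bar>Y z - y\<bar> \<le> M2 * E z"
    unfolding tracks_def by blast
  show ?thesis unfolding tracks_def
  proof (intro exI conjI ballI impI)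
    fix z assume z: "z \<in> Z" "E z \<le> min (min e1 e2) 1"
    have e: "0 \<le> E z" "E z \<le> 1" using z nn by auto
    have dx: "\<bar>X z - x\<bar> \<le> M1 * E z" and dy: "\<bar>Y z - y\<bar> \<le> M2 * E z" using a b z by auto
    have "\<bar>Y z\<bar> \<le> \<bar>y\<bar> + M2" using dy e b(1) mult_left_le[of "E z" M2] by linarith
    have "X z * Y z - x * y = (X z - x) * Y z + x * (Y z - y)" by (simp add: algebra_simps)
    hence "\<bar>X z * Y z - x * y\<bar> \<le> \<bar>X z - x\<bar> * \<bar>Y z\<bar> + \<bar>x\<bar> * \<bar>Y z - y\<bar>"
      by (metis abs_mult abs_triangle_ineq)
    also have "\<dots> \<le> (M1 * E z) * (\<bar>y\<bar> + M2) + \<bar>x\<bar> * (M2 * E z)"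
      using dx dy \<open>\<bar>Y z\<bar> \<le> \<bar>y\<bar> + M2\<close> a(1) b(1) e
      by (intro add_mono mult_mono mult_left_mono) auto
    finally show "\<bar>X z * Y z - x * y\<bar> \<le> (M1 * (\<bar>y\<bar> + M2) + \<bar>x\<bar> * M2) * E z"
      by (simp add: algebra_simps)
  qed (use a b in auto)
qed

lemma tr_inverse:
  assumes "tracks Z X x E" "x \<noteq> 0" and nn: "\<And>z. z \<in> Z \<Longrightarrow> E z \<ge> 0"
  shows "tracks Z (\<lambda>z. 1 / X z) (1 / x) E"
proof -
  from assms obtain M1 e1 where a: "M1 \<ge> 0" "e1 > 0" "\<forall>z\<in>Z. E z \<le> e1 \<longrightarrow> \<bar>X z - x\<bar> \<le> M1 * E z"
    unfolding tracks_def by blast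
  have ax: "\<bar>x\<bar> > 0" using assms by auto
  show ?thesis unfolding tracks_def
  proof (intro exI conjI ballI impI)
    fix z assume z: "z \<in> Z" "E z \<le> min e1 (\<bar>x\<bar> / (2 * (M1 + 1)))"
    have e: "0 \<le> E z" using z nn by auto
    have dx: "\<bar>X z - x\<bar> \<le> M1 * E z" using a z by auto
    have "M1 * E z \<le> (M1 + 1) * E z" using e by (simp add: algebra_simps)
    also have "\<dots> \<le> (M1 + 1) * (\<bar>x\<bar> / (2 * (M1 + 1)))" using z a(1) by (intro mult_left_mono) auto
    also have "\<dots> = \<bar>x\<bar> / 2" using a(1) by (simp add: field_simps)
    finally have "\<bar>X z - x\<bar> \<le> \<bar>x\<bar> / 2" using dx by linarith
    hence X: "\<bar>X z\<bar> \<ge> \<bar>x\<bar> / 2" by linarith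
    hence Xnz: "X z \<noteq> 0" using ax by auto
    have "1 / X z - 1 / x = (x - X z) / (X z * x)" using Xnz assms(2) by (simp add: field_simps)
    hence "\<bar>1 / X z - 1 / x\<bar> = \<bar>X z - x\<bar> / (\<bar>X z\<bar> * \<bar>x\<bar>)"
      by (simp add: abs_mult abs_minus_commute)
    also have "\<dots> \<le> (M1 * E z) / ((\<bar>x\<bar> / 2) * \<bar>x\<bar>)"
      using dx X ax by (intro frac_le mult_mono) (auto simp: zero_less_mult_iff)
    also have "\<dots> = (2 * M1 / (\<bar>x\<bar> * \<bar>x\<bar>)) * E z" using ax by (simp add: field_simps)
    finally show "\<bar>1 / X z - 1 / x\<bar> \<le> (2 * M1 / (\<bar>x\<bar> * \<bar>x\<bar>)) * E z" .
  qed (use a ax in auto)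
qed

lemma tr_divide:
  assumes "tracks Z X x E" "tracks Z Y y E" "y \<noteq> 0" and nn: "\<And>z. z \<in> Z \<Longrightarrow> E z \<ge> 0"
  shows "tracks Z (\<lambda>z. X z / Y z) (x / y) E"
  using tr_mult[OF assms(1) tr_inverse[OF assms(2,3) nn] nn] by simp

lemma tr_sqrt:
  assumes "tracks Z X x E" "x > 0" and nn: "\<And>z. z \<in> Z \<Longrightarrow> E z \<ge> 0"
  shows "tracks Z (\<lambda>z. sqrt (max 0 (X z))) (sqrt x) E"
proof -
  from assms obtain M1 e1 where a: "M1 \<ge> 0" "e1 > 0" "\<forall>z\<in>Z. E z \<le> e1 \<longrightarrow> \<bar>X z - x\<bar> \<le> M1 * E z"
    unfolding tracks_def by blast
  have sx: "sqrt x > 0" using assms by auto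
  show ?thesis unfolding tracks_def
  proof (intro exI conjI ballI impI)
    fix z assume z: "z \<in> Z" "E z \<le> e1"
    have dx: "\<bar>X z - x\<bar> \<le> M1 * E z" using a z by auto
    define w where "w = max 0 (X z)"
    have w: "w \<ge> 0" "\<bar>w - x\<bar> \<le> \<bar>X z - x\<bar>" using assms(2) unfolding w_def by auto
    have ww: "sqrt w * sqrt w = w" "sqrt x * sqrt x = x" using w assms(2) by simp_all
    have "(sqrt w - sqrt x) * (sqrt w + sqrt x) = w - x" using ww by (simp add: algebra_simps)
    hence "\<bar>sqrt w - sqrt x\<bar> * \<bar>sqrt w + sqrt x\<bar> = \<bar>w - x\<bar>"
      by (metis abs_mult)
    moreover have "\<bar>sqrt w + sqrt x\<bar> = sqrt w + sqrt x" using w sx by simp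
    ultimately have "\<bar>sqrt w - sqrt x\<bar> * (sqrt w + sqrt x) = \<bar>w - x\<bar>" by simp
    moreover have "\<bar>sqrt w - sqrt x\<bar> * sqrt x \<le> \<bar>sqrt w - sqrt x\<bar> * (sqrt w + sqrt x)"
      using w by (intro mult_left_mono) auto
    ultimately have "\<bar>sqrt w - sqrt x\<bar> * sqrt x \<le> M1 * E z" using w dx by linarith
    hence "\<bar>sqrt w - sqrt x\<bar> \<le> (M1 * E z) / sqrt x" using sx by (simp add: pos_le_divide_eq)
    thus "\<bar>sqrt (max 0 (X z)) - sqrt x\<bar> \<le> (M1 / sqrt x) * E z" unfolding w_def by simp
  qed (use a sx in auto)
qed



lemma est_tracks:
  assumes nn: "\<And>z. z \<in> Z \<Longrightarrow> E z \<ge> 0"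
    and tA: "tracks Z LA la E" and tB: "tracks Z LB lb E" and tC: "tracks Z LC lc E"
    and tAB: "tracks Z OAB oab E" and tAC: "tracks Z OAC oac E" and tBC: "tracks Z OBC obc E"
    and r: "r \<noteq> 0" and xa: "xa \<noteq> 0" and xb: "xb \<noteq> 0" and xc: "xc \<noteq> 0"
    and eab: "oab - la * lb = r * xa * xb" and eac: "oac - la * lc = r * xa * xc"
    and ebc: "obc - lb * lc = r * xb * xc" and sg: "sg = sgn xa"
  defines "XA \<equiv> \<lambda>z. sg * sqrt (max 0 ((OAB z - LA z * LB z) * (OAC z - LA z * LC z) / (r * (OBC z - LB z * LC z))))"
  shows "tracks Z (\<lambda>z. LA z + XA z) (la + xa) E"
    and "tracks Z (\<lambda>z. LB z + (OAB z - LA z * LB z) / (r * XA z)) (lb + xb) E"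
    and "tracks Z (\<lambda>z. LC z + (OAC z - LA z * LC z) / (r * XA z)) (lc + xc) E"
proof -
  have cab: "tracks Z (\<lambda>z. OAB z - LA z * LB z) (r * xa * xb) E"
    using tr_diff[OF tAB tr_mult[OF tA tB nn]] eab by simp
  have cac: "tracks Z (\<lambda>z. OAC z - LA z * LC z) (r * xa * xc) E"
    using tr_diff[OF tAC tr_mult[OF tA tC nn]] eac by simp
  have cbc: "tracks Z (\<lambda>z. OBC z - LB z * LC z) (r * xb * xc) E"
    using tr_diff[OF tBC tr_mult[OF tB tC nn]] ebc by simp
  have den: "tracks Z (\<lambda>z. r * (OBC z - LB z * LC z)) (r * (r * xb * xc)) E"
    by (rule tr_mult[OF tr_const[OF nn] cbc nn])
  have K: "tracks Z (\<lambda>z. (OAB z - LA z * LB z) * (OAC z - LA z * LC z) / (r * (OBC z - LB z * LC z))) (xa^2) E"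
    apply (rule tr_eq[OF tr_divide[OF tr_mult[OF cab cac nn] den _ nn]])
    using r xa xb xc by (auto simp: field_simps power2_eq_square)
  have S: "tracks Z (\<lambda>z. sqrt (max 0 ((OAB z - LA z * LB z) * (OAC z - LA z * LC z) / (r * (OBC z - LB z * LC z))))) (\<bar>xa\<bar>) E"
    using tr_sqrt[OF K _ nn] xa by simp
  have XA: "tracks Z XA xa E"
    unfolding XA_def
    apply (rule tr_eq[OF tr_mult[OF tr_const[OF nn] S nn]])
    by (simp_all add: sg sgn_mult_abs)
  show "tracks Z (\<lambda>z. LA z + XA z) (la + xa) E" by (rule tr_add[OF tA XA])
  have rXA: "tracks Z (\<lambda>z. r * XA z) (r * xa) E" by (rule tr_mult[OF tr_const[OF nn] XA nn])
  show "tracks Z (\<lambda>z. LB z + (OAB z - LA z * LB z) / (r * XA z)) (lb + xb) E"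
    apply (rule tr_eq[OF tr_add[OF tB tr_divide[OF cab rXA _ nn]]])
    using r xa by auto
  show "tracks Z (\<lambda>z. LC z + (OAC z - LA z * LC z) / (r * XA z)) (lc + xc) E"
    apply (rule tr_eq[OF tr_add[OF tC tr_divide[OF cac rXA _ nn]]])
    using r xa by auto
qed

lemma prod_meas:
  "measure_pmf.prob (pair_pmf M N) (A \<times> B) = measure_pmf.prob M A * measure_pmf.prob N B"
proof -
  have "measure_pmf.prob (pair_pmf M N) (A \<times> B) = measure_pmf.prob (pair_pmf M N) ((A \<times> B) \<inter> set_pmf (pair_pmf M N))"
    by (rule measure_Int_set_pmf[symmetric])
  also have "(A \<times> B) \<inter> set_pmf (pair_pmf M N) = (A \<inter> set_pmf M) \<times> (B \<inter> set_pmf N)" by auto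
  also have "measure_pmf.prob (pair_pmf M N) \<dots> = measure_pmf.prob M (A \<inter> set_pmf M) * measure_pmf.prob N (B \<inter> set_pmf N)"
    by (rule measure_pmf_prob_product) (auto intro: countable_subset[OF _ countable_set_pmf])
  finally show ?thesis by (simp add: measure_Int_set_pmf)
qed

lemma ci_prod:
  fixes D :: "('y \<times> 'y \<times> 'y \<times> 'y) pmf"
  assumes CI: "cond_indep3 D" and py: "measure_pmf.prob D {s. lat s = y} > 0"
  shows "measure_pmf.prob D {s. lat s = y \<and> A (lab_a s) \<and> B (lab_b s) \<and> C (lab_c s)} =
     measure_pmf.prob D {s. lat s = y} * cprob D y (\<lambda>s. A (lab_a s)) * cprob D y (\<lambda>s. B (lab_b s))
       * cprob D y (\<lambda>s. C (lab_c s))"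
proof -
  define L where "L = {s. lat s = y}"
  define P where "P = measure_pmf.prob D L"
  have P: "P > 0" using py by (simp add: P_def L_def)
  have ne: "set_pmf D \<inter> L \<noteq> {}"
  proof
    assume "set_pmf D \<inter> L = {}"
    hence "measure_pmf.prob D L = 0" by (simp add: measure_pmf_zero_iff Int_commute)
    thus False using P by (simp add: P_def)
  qed
  define Cd where "Cd = cond_pmf D L"
  have mC: "measure_pmf.prob Cd T = measure_pmf.prob D (L \<inter> T) / P" for T
  proof -
    have "emeasure (measure_pmf D) L \<noteq> 0" using P by (simp add: P_def measure_pmf.emeasure_eq_measure)
    thus ?thesis unfolding Cd_def cond_pmf.rep_eq[OF ne] P_def
      by (subst measure_uniform_measure) (auto simp: measure_pmf.emeasure_eq_measure)
  qed
  define Da where "Da = map_pmf lab_a Cd"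
  define Db where "Db = map_pmf lab_b Cd"
  define Dc where "Dc = map_pmf lab_c Cd"
  define Q where "Q = pair_pmf Da (pair_pmf Db Dc)"
  define emb :: "'y \<times> 'y \<times> 'y \<Rightarrow> 'y \<times> 'y \<times> 'y \<times> 'y" where "emb = (\<lambda>(a,b,c). (y,a,b,c))"
  have inj: "inj emb" unfolding emb_def by (auto simp: inj_def)
  have pA: "pmf Da a = measure_pmf.prob D {s. lat s = y \<and> lab_a s = a} / P" for a
    unfolding Da_def pmf_map mC by (rule arg_cong2[where f="(/)"], rule arg_cong[where f="measure_pmf.prob D"]) (auto simp: L_def)
  have pB: "pmf Db a = measure_pmf.prob D {s. lat s = y \<and> lab_b s = a} / P" for a
    unfolding Db_def pmf_map mC by (rule arg_cong2[where f="(/)"], rule arg_cong[where f="measure_pmf.prob D"]) (auto simp: L_def)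
  have pC: "pmf Dc a = measure_pmf.prob D {s. lat s = y \<and> lab_c s = a} / P" for a
    unfolding Dc_def pmf_map mC by (rule arg_cong2[where f="(/)"], rule arg_cong[where f="measure_pmf.prob D"]) (auto simp: L_def)
  have CQ: "Cd = map_pmf emb Q"
  proof (rule pmf_eqI)
    fix x :: "'y \<times> 'y \<times> 'y \<times> 'y"
    obtain y' a b c where x: "x = (y', a, b, c)" by (cases x) auto
    show "pmf Cd x = pmf (map_pmf emb Q) x"
    proof (cases "y' = y")
      case True
      have "pmf (map_pmf emb Q) x = pmf Q (a, b, c)"
        using pmf_map_inj'[OF inj, of Q "(a,b,c)"] by (simp add: x True emb_def)
      also have "\<dots> = pmf Da a * pmf Db b * pmf Dc c" by (simp add: Q_def pmf_pair)
      finally have r: "pmf (map_pmf emb Q) x = pmf Da a * pmf Db b * pmf Dc c" .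
      have l: "pmf Cd x = pmf D x / P" unfolding Cd_def pmf_cond[OF ne] P_def
        by (simp add: x True L_def lat_def)
      have e1: "pmf (map_pmf lat D) y = P" unfolding pmf_map P_def L_def by (simp add: vimage_def)
      have e2: "pmf (map_pmf (\<lambda>s. (lat s, f s)) D) (y, v) = measure_pmf.prob D {s. lat s = y \<and> f s = v}"
        for f :: "'y \<times> 'y \<times> 'y \<times> 'y \<Rightarrow> 'y" and v
        unfolding pmf_map by (simp add: vimage_def)
      have ci: "pmf D x * P^2 = measure_pmf.prob D {s. lat s = y \<and> lab_a s = a} *
          measure_pmf.prob D {s. lat s = y \<and> lab_b s = b} * measure_pmf.prob D {s. lat s = y \<and> lab_c s = c}"
      proof -
        have "pmf D (y, a, b, c) * (pmf (map_pmf lat D) y)^2 =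
          pmf (map_pmf (\<lambda>s. (lat s, lab_a s)) D) (y, a) *
          pmf (map_pmf (\<lambda>s. (lat s, lab_b s)) D) (y, b) *
          pmf (map_pmf (\<lambda>s. (lat s, lab_c s)) D) (y, c)"
          using CI unfolding cond_indep3_def by blast
        thus ?thesis by (simp only: e1 e2 x True)
      qed
      show ?thesis unfolding l r pA pB pC
        using P ci by (simp add: field_simps power2_eq_square)
    next
      case False
      have "pmf Cd x = 0" unfolding Cd_def pmf_cond[OF ne] using False by (simp add: x L_def lat_def)
      moreover have "pmf (map_pmf emb Q) x = 0" unfolding pmf_map
        using False by (simp add: x emb_def vimage_def split_beta)
      ultimately show ?thesis by simp
    qed
  qed
  define F where "F = {s. A (lab_a s) \<and> B (lab_b s) \<and> C (lab_c s)}"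
  have "measure_pmf.prob D {s. lat s = y \<and> A (lab_a s) \<and> B (lab_b s) \<and> C (lab_c s)} = measure_pmf.prob D (L \<inter> F)"
    by (rule arg_cong[where f="measure_pmf.prob D"]) (auto simp: L_def F_def)
  also have "\<dots> = P * measure_pmf.prob Cd F" using mC[of F] P by simp
  also have "measure_pmf.prob Cd F = measure_pmf.prob Q (emb -` F)" by (simp add: CQ)
  also have "emb -` F = {a. A a} \<times> {b. B b} \<times> {c. C c}"
    by (auto simp: emb_def F_def lab_a_def lab_b_def lab_c_def)
  also have "measure_pmf.prob Q \<dots> = measure_pmf.prob Da {a. A a} * measure_pmf.prob Db {b. B b} * measure_pmf.prob Dc {c. C c}"
    by (simp add: Q_def prod_meas)
  also have "measure_pmf.prob Da {a. A a} = cprob D y (\<lambda>s. A (lab_a s))"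
    unfolding Da_def measure_map_pmf mC cprob_def P_def L_def by (simp add: vimage_def Int_def)
  also have "measure_pmf.prob Db {a. B a} = cprob D y (\<lambda>s. B (lab_b s))"
    unfolding Db_def measure_map_pmf mC cprob_def P_def L_def by (simp add: vimage_def Int_def)
  also have "measure_pmf.prob Dc {a. C a} = cprob D y (\<lambda>s. C (lab_c s))"
    unfolding Dc_def measure_map_pmf mC cprob_def P_def L_def by (simp add: vimage_def Int_def)
  finally show ?thesis by (simp add: P_def L_def mult_ac)
qed


lemma split_y:
  fixes D :: "('y \<times> 'y \<times> 'y \<times> 'y) pmf"
  assumes "y \<noteq> z" "\<forall>s\<in>set_pmf D. lat s \<in> {y, z}"
  shows "measure_pmf.prob D {s. F s} = measure_pmf.prob D {s. lat s = y \<and> F s} + measure_pmf.prob D {s. lat s = z \<and> F s}"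
proof -
  have "measure_pmf.prob D {s. F s} = measure_pmf.prob D ({s. F s} \<inter> set_pmf D)" by (rule measure_Int_set_pmf[symmetric])
  also have "{s. F s} \<inter> set_pmf D = ({s. lat s = y \<and> F s} \<inter> set_pmf D) \<union> ({s. lat s = z \<and> F s} \<inter> set_pmf D)"
    using assms(2) by auto
  also have "measure_pmf.prob D \<dots> = measure_pmf.prob D ({s. lat s = y \<and> F s} \<inter> set_pmf D) + measure_pmf.prob D ({s. lat s = z \<and> F s} \<inter> set_pmf D)"
    by (rule measure_pmf.finite_measure_Union) (use assms(1) in auto)
  finally show ?thesis by (simp add: measure_Int_set_pmf)
qed

lemma cond_forms:
  fixes D :: "('y \<times> 'y \<times> 'y \<times> 'y) pmf"
  assumes CI: "cond_indep3 D" and py: "measure_pmf.prob D {s. lat s = y} > 0"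
  shows "measure_pmf.prob D {s. lat s = y \<and> A (lab_a s)} = measure_pmf.prob D {s. lat s = y} * cprob D y (\<lambda>s. A (lab_a s))"
    and "measure_pmf.prob D {s. lat s = y \<and> B (lab_b s)} = measure_pmf.prob D {s. lat s = y} * cprob D y (\<lambda>s. B (lab_b s))"
    and "measure_pmf.prob D {s. lat s = y \<and> C (lab_c s)} = measure_pmf.prob D {s. lat s = y} * cprob D y (\<lambda>s. C (lab_c s))"
    and "measure_pmf.prob D {s. lat s = y \<and> A (lab_a s) \<and> B (lab_b s)} = measure_pmf.prob D {s. lat s = y} * cprob D y (\<lambda>s. A (lab_a s)) * cprob D y (\<lambda>s. B (lab_b s))"
    and "measure_pmf.prob D {s. lat s = y \<and> A (lab_a s) \<and> C (lab_c s)} = measure_pmf.prob D {s. lat s = y} * cprob D y (\<lambda>s. A (lab_a s)) * cprob D y (\<lambda>s. C (lab_c s))"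
    and "measure_pmf.prob D {s. lat s = y \<and> B (lab_b s) \<and> C (lab_c s)} = measure_pmf.prob D {s. lat s = y} * cprob D y (\<lambda>s. B (lab_b s)) * cprob D y (\<lambda>s. C (lab_c s))"
proof -
  have t: "cprob D y (\<lambda>s. True) = 1" using py by (simp add: cprob_def)
  show "measure_pmf.prob D {s. lat s = y \<and> A (lab_a s)} = measure_pmf.prob D {s. lat s = y} * cprob D y (\<lambda>s. A (lab_a s))"
    using ci_prod[OF CI py, of A "\<lambda>_. True" "\<lambda>_. True"] t by simp
  show "measure_pmf.prob D {s. lat s = y \<and> B (lab_b s)} = measure_pmf.prob D {s. lat s = y} * cprob D y (\<lambda>s. B (lab_b s))"
    using ci_prod[OF CI py, of "\<lambda>_. True" B "\<lambda>_. True"] t by simp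
  show "measure_pmf.prob D {s. lat s = y \<and> C (lab_c s)} = measure_pmf.prob D {s. lat s = y} * cprob D y (\<lambda>s. C (lab_c s))"
    using ci_prod[OF CI py, of "\<lambda>_. True" "\<lambda>_. True" C] t by simp
  show "measure_pmf.prob D {s. lat s = y \<and> A (lab_a s) \<and> B (lab_b s)} = measure_pmf.prob D {s. lat s = y} * cprob D y (\<lambda>s. A (lab_a s)) * cprob D y (\<lambda>s. B (lab_b s))"
    using ci_prod[OF CI py, of A B "\<lambda>_. True"] t by simp
  show "measure_pmf.prob D {s. lat s = y \<and> A (lab_a s) \<and> C (lab_c s)} = measure_pmf.prob D {s. lat s = y} * cprob D y (\<lambda>s. A (lab_a s)) * cprob D y (\<lambda>s. C (lab_c s))"
    using ci_prod[OF CI py, of A "\<lambda>_. True" C] t by simp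
  show "measure_pmf.prob D {s. lat s = y \<and> B (lab_b s) \<and> C (lab_c s)} = measure_pmf.prob D {s. lat s = y} * cprob D y (\<lambda>s. B (lab_b s)) * cprob D y (\<lambda>s. C (lab_c s))"
    using ci_prod[OF CI py, of "\<lambda>_. True" B C] t by simp
qed

lemma alg_id:
  fixes p' aa ab ba bb :: real
  assumes "p' \<noteq> 1"
  shows "(p'*aa*ab + (1-p')*ba*bb) - (p'*aa + (1-p')*ba)*(p'*ab + (1-p')*bb)
      = (p'/(1-p')) * (aa - (p'*aa + (1-p')*ba)) * (ab - (p'*ab + (1-p')*bb))"
proof -
  have "1 - p' \<noteq> 0" using assms by simp
  thus ?thesis by (simp add: field_simps)
qed

lemma truth:
  fixes D :: "('y \<times> 'y \<times> 'y \<times> 'y) pmf"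
  assumes CI: "cond_indep3 D" and yz: "y \<noteq> z" and supp: "\<forall>s\<in>set_pmf D. lat s \<in> {y, z}"
    and py: "measure_pmf.prob D {s. lat s = y} = pp" and pz: "measure_pmf.prob D {s. lat s = z} = 1 - pp"
    and pp: "0 < pp" "pp < 1"
  shows "measure_pmf.prob D {s. A (lab_a s) \<and> B (lab_b s)} - measure_pmf.prob D {s. A (lab_a s)} * measure_pmf.prob D {s. B (lab_b s)}
      = (pp/(1-pp)) * (cprob D y (\<lambda>s. A (lab_a s)) - measure_pmf.prob D {s. A (lab_a s)}) * (cprob D y (\<lambda>s. B (lab_b s)) - measure_pmf.prob D {s. B (lab_b s)})"
    and "measure_pmf.prob D {s. A (lab_a s) \<and> C (lab_c s)} - measure_pmf.prob D {s. A (lab_a s)} * measure_pmf.prob D {s. C (lab_c s)}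
      = (pp/(1-pp)) * (cprob D y (\<lambda>s. A (lab_a s)) - measure_pmf.prob D {s. A (lab_a s)}) * (cprob D y (\<lambda>s. C (lab_c s)) - measure_pmf.prob D {s. C (lab_c s)})"
    and "measure_pmf.prob D {s. B (lab_b s) \<and> C (lab_c s)} - measure_pmf.prob D {s. B (lab_b s)} * measure_pmf.prob D {s. C (lab_c s)}
      = (pp/(1-pp)) * (cprob D y (\<lambda>s. B (lab_b s)) - measure_pmf.prob D {s. B (lab_b s)}) * (cprob D y (\<lambda>s. C (lab_c s)) - measure_pmf.prob D {s. C (lab_c s)})"
proof -
  have py': "measure_pmf.prob D {s. lat s = y} > 0" using py pp by simp
  have pz': "measure_pmf.prob D {s. lat s = z} > 0" using pz pp by simp
  note Y = cond_forms[OF CI py', unfolded py]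
  note Z = cond_forms[OF CI pz', unfolded pz]
  note sp = split_y[OF yz supp]
  have la: "measure_pmf.prob D {s. A (lab_a s)} = pp * cprob D y (\<lambda>s. A (lab_a s)) + (1 - pp) * cprob D z (\<lambda>s. A (lab_a s))"
    using sp[of "\<lambda>s. A (lab_a s)"] Y(1) Z(1) by simp
  have lb: "measure_pmf.prob D {s. B (lab_b s)} = pp * cprob D y (\<lambda>s. B (lab_b s)) + (1 - pp) * cprob D z (\<lambda>s. B (lab_b s))"
    using sp[of "\<lambda>s. B (lab_b s)"] Y(2) Z(2) by simp
  have lc: "measure_pmf.prob D {s. C (lab_c s)} = pp * cprob D y (\<lambda>s. C (lab_c s)) + (1 - pp) * cprob D z (\<lambda>s. C (lab_c s))"
    using sp[of "\<lambda>s. C (lab_c s)"] Y(3) Z(3) by simp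
  have oab: "measure_pmf.prob D {s. A (lab_a s) \<and> B (lab_b s)} = pp * cprob D y (\<lambda>s. A (lab_a s)) * cprob D y (\<lambda>s. B (lab_b s)) + (1 - pp) * cprob D z (\<lambda>s. A (lab_a s)) * cprob D z (\<lambda>s. B (lab_b s))"
    using sp[of "\<lambda>s. A (lab_a s) \<and> B (lab_b s)"] Y(4) Z(4) by simp
  have oac: "measure_pmf.prob D {s. A (lab_a s) \<and> C (lab_c s)} = pp * cprob D y (\<lambda>s. A (lab_a s)) * cprob D y (\<lambda>s. C (lab_c s)) + (1 - pp) * cprob D z (\<lambda>s. A (lab_a s)) * cprob D z (\<lambda>s. C (lab_c s))"
    using sp[of "\<lambda>s. A (lab_a s) \<and> C (lab_c s)"] Y(5) Z(5) by simp
  have obc: "measure_pmf.prob D {s. B (lab_b s) \<and> C (lab_c s)} = pp * cprob D y (\<lambda>s. B (lab_b s)) * cprob D y (\<lambda>s. C (lab_c s)) + (1 - pp) * cprob D z (\<lambda>s. B (lab_b s)) * cprob D z (\<lambda>s. C (lab_c s))"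
    using sp[of "\<lambda>s. B (lab_b s) \<and> C (lab_c s)"] Y(6) Z(6) by simp
  have ne: "pp \<noteq> 1" using pp by simp
  show "measure_pmf.prob D {s. A (lab_a s) \<and> B (lab_b s)} - measure_pmf.prob D {s. A (lab_a s)} * measure_pmf.prob D {s. B (lab_b s)}
      = (pp/(1-pp)) * (cprob D y (\<lambda>s. A (lab_a s)) - measure_pmf.prob D {s. A (lab_a s)}) * (cprob D y (\<lambda>s. B (lab_b s)) - measure_pmf.prob D {s. B (lab_b s)})"
    unfolding oab la lb by (rule alg_id[OF ne])
  show "measure_pmf.prob D {s. A (lab_a s) \<and> C (lab_c s)} - measure_pmf.prob D {s. A (lab_a s)} * measure_pmf.prob D {s. C (lab_c s)}
      = (pp/(1-pp)) * (cprob D y (\<lambda>s. A (lab_a s)) - measure_pmf.prob D {s. A (lab_a s)}) * (cprob D y (\<lambda>s. C (lab_c s)) - measure_pmf.prob D {s. C (lab_c s)})"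
    unfolding oac la lc by (rule alg_id[OF ne])
  show "measure_pmf.prob D {s. B (lab_b s) \<and> C (lab_c s)} - measure_pmf.prob D {s. B (lab_b s)} * measure_pmf.prob D {s. C (lab_c s)}
      = (pp/(1-pp)) * (cprob D y (\<lambda>s. B (lab_b s)) - measure_pmf.prob D {s. B (lab_b s)}) * (cprob D y (\<lambda>s. C (lab_c s)) - measure_pmf.prob D {s. C (lab_c s)})"
    unfolding obc lb lc by (rule alg_id[OF ne])
qed

lemma triplet_tracks:
  fixes g :: "'y \<Rightarrow> nat \<Rightarrow> int" and nz :: "'z \<Rightarrow> nat" and ob :: "'z \<Rightarrow> nat \<Rightarrow> 'y \<times> 'y \<times> 'y"
  assumes nn: "\<And>z. z \<in> Z \<Longrightarrow> E z \<ge> 0"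
    and tA: "tracks Z (\<lambda>z. emp (nz z) (\<lambda>j. g (fst (ob z j)) i = 1)) la E"
    and tB: "tracks Z (\<lambda>z. emp (nz z) (\<lambda>j. g (fst (snd (ob z j))) i = 1)) lb E"
    and tC: "tracks Z (\<lambda>z. emp (nz z) (\<lambda>j. g (snd (snd (ob z j))) i = 1)) lc E"
    and tAB: "tracks Z (\<lambda>z. emp (nz z) (\<lambda>j. g (fst (ob z j)) i = 1 \<and> g (fst (snd (ob z j))) i = 1)) oab E"
    and tAC: "tracks Z (\<lambda>z. emp (nz z) (\<lambda>j. g (fst (ob z j)) i = 1 \<and> g (snd (snd (ob z j))) i = 1)) oac E"
    and tBC: "tracks Z (\<lambda>z. emp (nz z) (\<lambda>j. g (fst (snd (ob z j))) i = 1 \<and> g (snd (snd (ob z j))) i = 1)) obc E"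
    and r: "p' / (1 - p') \<noteq> 0" and xa: "\<alpha> - la \<noteq> 0" and xb: "\<beta> - lb \<noteq> 0" and xc: "\<gamma> - lc \<noteq> 0"
    and eab: "oab - la * lb = (p' / (1 - p')) * (\<alpha> - la) * (\<beta> - lb)"
    and eac: "oac - la * lc = (p' / (1 - p')) * (\<alpha> - la) * (\<gamma> - lc)"
    and ebc: "obc - lb * lc = (p' / (1 - p')) * (\<beta> - lb) * (\<gamma> - lc)"
  shows "tracks Z (\<lambda>z. fst (triplet_est g p' (nz z) (ob z) i (sgn (\<alpha> - la)))) \<alpha> E"
    and "tracks Z (\<lambda>z. fst (snd (triplet_est g p' (nz z) (ob z) i (sgn (\<alpha> - la))))) \<beta> E"
    and "tracks Z (\<lambda>z. snd (snd (triplet_est g p' (nz z) (ob z) i (sgn (\<alpha> - la))))) \<gamma> E"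
proof -
  note T = est_tracks[OF nn tA tB tC tAB tAC tBC r xa xb xc eab eac ebc refl]
  show "tracks Z (\<lambda>z. fst (triplet_est g p' (nz z) (ob z) i (sgn (\<alpha> - la)))) \<alpha> E"
    using T(1) by (simp add: triplet_est_def Let_def)
  show "tracks Z (\<lambda>z. fst (snd (triplet_est g p' (nz z) (ob z) i (sgn (\<alpha> - la))))) \<beta> E"
    using T(2) by (simp add: triplet_est_def Let_def)
  show "tracks Z (\<lambda>z. snd (snd (triplet_est g p' (nz z) (ob z) i (sgn (\<alpha> - la))))) \<gamma> E"
    using T(3) by (simp add: triplet_est_def Let_def)
qed

lemma tr_combine3:
  assumes "tracks Z X x E" "tracks Z Y y E" "tracks Z W w E" and nn: "\<And>z. z \<in> Z \<Longrightarrow> E z \<ge> 0"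
  shows "\<exists>M e. M \<ge> 0 \<and> e > 0 \<and> (\<forall>z\<in>Z. E z \<le> e \<longrightarrow> \<bar>X z - x\<bar> \<le> M * E z \<and> \<bar>Y z - y\<bar> \<le> M * E z \<and> \<bar>W z - w\<bar> \<le> M * E z)"
proof -
  from assms obtain M1 e1 M2 e2 M3 e3 where a: "M1 \<ge> 0" "e1 > 0" "\<forall>z\<in>Z. E z \<le> e1 \<longrightarrow> \<bar>X z - x\<bar> \<le> M1 * E z"
    and b: "M2 \<ge> 0" "e2 > 0" "\<forall>z\<in>Z. E z \<le> e2 \<longrightarrow> \<bar>Y z - y\<bar> \<le> M2 * E z"
    and c: "M3 \<ge> 0" "e3 > 0" "\<forall>z\<in>Z. E z \<le> e3 \<longrightarrow> \<bar>W z - w\<bar> \<le> M3 * E z"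
    unfolding tracks_def by blast
  show ?thesis
  proof (intro exI conjI ballI impI)
    fix z assume z: "z \<in> Z" "E z \<le> min e1 (min e2 e3)"
    have e: "E z \<ge> 0" using nn z by auto
    have "M1 * E z \<le> (M1 + M2 + M3) * E z" "M2 * E z \<le> (M1 + M2 + M3) * E z" "M3 * E z \<le> (M1 + M2 + M3) * E z"
      using a b c e by (auto intro!: mult_right_mono)
    thus "\<bar>X z - x\<bar> \<le> (M1 + M2 + M3) * E z" "\<bar>Y z - y\<bar> \<le> (M1 + M2 + M3) * E z" "\<bar>W z - w\<bar> \<le> (M1 + M2 + M3) * E z"
      using a b c z by force+
  qed (use a b c in auto)
qed

lemma uniform_choice:
  fixes R :: "nat \<Rightarrow> 'z \<Rightarrow> real \<Rightarrow> bool"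
  assumes ex: "\<forall>i<d. \<exists>M e. M \<ge> 0 \<and> e > 0 \<and> (\<forall>z\<in>Z. E z \<le> e \<longrightarrow> R i z (M * E z))"
    and mono: "\<And>i z a b. R i z a \<Longrightarrow> a \<le> b \<Longrightarrow> R i z b"
    and nn: "\<And>z. z \<in> Z \<Longrightarrow> E z \<ge> 0"
  shows "\<exists>M e. M \<ge> 0 \<and> e > 0 \<and> (\<forall>i<d. \<forall>z\<in>Z. E z \<le> e \<longrightarrow> R i z (M * E z))"
  using ex
proof (induction d)
  case 0
  show ?case by (rule exI[of _ 0], rule exI[of _ 1]) auto
next
  case (Suc d)
  from Suc.prems have "\<forall>i<d. \<exists>M e. M \<ge> 0 \<and> e > 0 \<and> (\<forall>z\<in>Z. E z \<le> e \<longrightarrow> R i z (M * E z))" by auto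
  from Suc.IH[OF this] obtain M e where a: "M \<ge> 0" "e > 0" "\<forall>i<d. \<forall>z\<in>Z. E z \<le> e \<longrightarrow> R i z (M * E z)" by blast
  from Suc.prems obtain M' e' where b: "M' \<ge> 0" "e' > 0" "\<forall>z\<in>Z. E z \<le> e' \<longrightarrow> R d z (M' * E z)" by blast
  show ?case
  proof (rule exI[of _ "max M M'"], rule exI[of _ "min e e'"], intro conjI allI impI ballI)
    fix i z assume i: "i < Suc d" and z: "z \<in> Z" "E z \<le> min e e'"
    have e: "E z \<ge> 0" using nn z by auto
    have m1: "M * E z \<le> max M M' * E z" and m2: "M' * E z \<le> max M M' * E z"
      using e by (auto intro!: mult_right_mono)
    show "R i z (max M M' * E z)"
    proof (cases "i < d")
      case True
      then show ?thesis using a z mono[OF _ m1] by auto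
    next
      case False
      hence "i = d" using i by simp
      then show ?thesis using b z mono[OF _ m2] by auto
    qed
  qed (use a b in auto)
qed

theorem mainTheorem1:
  fixes D :: "('y \<times> 'y \<times> 'y \<times> 'y) pmf"
    and g :: "'y \<Rightarrow> nat \<Rightarrow> int"
    and dY :: "'y \<Rightarrow> 'y \<Rightarrow> real"
    and d :: nat and y1 y2 y :: 'y and p :: real
  assumes pm1: "\<forall>x i. i < d \<longrightarrow> g x i \<in> {-1, 1}"
    and inj: "\<forall>x x'. (\<forall>i<d. g x i = g x' i) \<longrightarrow> x = x'"
    and isom: "\<forall>x x'. dY x x' = real (hamming d (g x) (g x'))"
    and y12: "y1 \<noteq> y2"
    and Yvals: "\<forall>s\<in>set_pmf D. lat s \<in> {y1, y2}"
    and p_def: "measure_pmf.prob D {s. lat s = y1} = p"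
    and p_pos: "0 < p" and p_lt1: "p < 1"
    and CI: "cond_indep3 D"
    and y_in: "y \<in> {y1, y2}"
    and informative: "\<forall>i<d.
        cprob D y (\<lambda>s. g (lab_a s) i = 1) \<noteq> measure_pmf.prob D {s. g (lab_a s) i = 1} \<and>
        cprob D y (\<lambda>s. g (lab_b s) i = 1) \<noteq> measure_pmf.prob D {s. g (lab_b s) i = 1} \<and>
        cprob D y (\<lambda>s. g (lab_c s) i = 1) \<noteq> measure_pmf.prob D {s. g (lab_c s) i = 1}"
  shows "\<exists>C>0. \<exists>\<epsilon>0>0. \<forall>n::nat. \<forall>\<delta>::real. n > 0 \<longrightarrow> \<delta> > 0 \<longrightarrow>
           ln (2 * real d ^ 2 / \<delta>) / (2 * real n) \<le> \<epsilon>0 \<longrightarrow>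
           measure_pmf.prob (Pi_pmf {..<n} undefined (\<lambda>_. D))
             {S. \<forall>i<d.
                 (let p' = (if y = y1 then p else 1 - p);
                      \<alpha> = cprob D y (\<lambda>s. g (lab_a s) i = 1);
                      \<beta> = cprob D y (\<lambda>s. g (lab_b s) i = 1);
                      \<gamma> = cprob D y (\<lambda>s. g (lab_c s) i = 1);
                      sg = sgn (\<alpha> - measure_pmf.prob D {s. g (lab_a s) i = 1});
                      est = triplet_est g p' n (\<lambda>j. snd (S j)) i sg;
                      bnd = C * (ln (2 * real d ^ 2 / \<delta>) / (2 * real n)) powr (1/4)
                  in \<bar>fst est - \<alpha>\<bar> \<le> bnd \<and> \<bar>fst (snd est) - \<beta>\<bar> \<le> bnd \<and>
                     \<bar>snd (snd est) - \<gamma>\<bar> \<le> bnd)}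
             \<ge> 1 - \<delta>"
proof (cases "d = 0")
  case True
  show ?thesis
    apply (rule exI[where x="1::real"])
    apply (rule conjI, simp)
    apply (rule exI[where x="1::real"])
    apply (rule conjI, simp)
    apply (simp add: True)
    done
next
  case False
  hence d: "d > 0" by simp
  define z where "z = (if y = y1 then y2 else y1)"
  have yz: "y \<noteq> z" using y12 y_in by (auto simp: z_def)
  have supp: "\<forall>s\<in>set_pmf D. lat s \<in> {y, z}" using Yvals y_in by (auto simp: z_def)
  have P2: "measure_pmf.prob D {s. lat s = y2} = 1 - p"
    using split_y[OF y12 Yvals, of "\<lambda>_. True"] p_def by simp
  define pp where "pp = (if y = y1 then p else 1 - p)"
  have Py: "measure_pmf.prob D {s. lat s = y} = pp" using y_in p_def P2 by (auto simp: pp_def)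
  have Pz: "measure_pmf.prob D {s. lat s = z} = 1 - pp" using y_in p_def P2 y12 by (auto simp: pp_def z_def)
  have pp: "0 < pp" "pp < 1" using p_pos p_lt1 by (auto simp: pp_def)
  define ev :: "nat \<Rightarrow> nat \<Rightarrow> 'y \<times> 'y \<times> 'y \<times> 'y \<Rightarrow> bool" where
    "ev i k s = [g (fst (snd s)) i = 1, g (fst (snd (snd s))) i = 1, g (snd (snd (snd s))) i = 1,
       g (fst (snd s)) i = 1 \<and> g (fst (snd (snd s))) i = 1, g (fst (snd s)) i = 1 \<and> g (snd (snd (snd s))) i = 1,
       g (fst (snd (snd s))) i = 1 \<and> g (snd (snd (snd s))) i = 1] ! k" for i k s
  define Z :: "(nat \<times> real \<times> (nat \<Rightarrow> 'y \<times> 'y \<times> 'y \<times> 'y)) set" where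
    "Z = {w. fst (snd w) \<ge> 0 \<and> (\<forall>i<d. \<forall>k<6. \<bar>emp (fst w) (\<lambda>j. ev i k (snd (snd w) j)) - measure_pmf.prob D {s. ev i k s}\<bar> \<le> 2 * sqrt (fst (snd w)))}"
  define E :: "nat \<times> real \<times> (nat \<Rightarrow> 'y \<times> 'y \<times> 'y \<times> 'y) \<Rightarrow> real" where
    "E w = 2 * sqrt (fst (snd w))" for w
  have nn: "\<And>w. w \<in> Z \<Longrightarrow> E w \<ge> 0" by (auto simp: Z_def E_def)
  define R :: "nat \<Rightarrow> nat \<times> real \<times> (nat \<Rightarrow> 'y \<times> 'y \<times> 'y \<times> 'y) \<Rightarrow> real \<Rightarrow> bool" where
    "R i w bnd = (let p' = (if y = y1 then p else 1 - p);
                      \<alpha> = cprob D y (\<lambda>s. g (lab_a s) i = 1);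
                      \<beta> = cprob D y (\<lambda>s. g (lab_b s) i = 1);
                      \<gamma> = cprob D y (\<lambda>s. g (lab_c s) i = 1);
                      sg = sgn (\<alpha> - measure_pmf.prob D {s. g (lab_a s) i = 1});
                      est = triplet_est g p' (fst w) (\<lambda>j. snd (snd (snd w) j)) i sg
                  in \<bar>fst est - \<alpha>\<bar> \<le> bnd \<and> \<bar>fst (snd est) - \<beta>\<bar> \<le> bnd \<and>
                     \<bar>snd (snd est) - \<gamma>\<bar> \<le> bnd)" for i w bnd
  have Rmono: "R i w b" if "R i w a" "a \<le> b" for i w a b
    using that unfolding R_def Let_def by linarith
  have each: "\<forall>i<d. \<exists>M e. M \<ge> 0 \<and> e > 0 \<and> (\<forall>w\<in>Z. E w \<le> e \<longrightarrow> R i w (M * E w))"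
  proof (intro allI impI)
    fix i assume i: "i < d"
    have zb: "\<bar>emp (fst w) (\<lambda>j. ev i k (snd (snd w) j)) - measure_pmf.prob D {s. ev i k s}\<bar> \<le> E w"
      if "w \<in> Z" "k < 6" for w k
    proof -
      have "\<forall>i<d. \<forall>k<6. \<bar>emp (fst w) (\<lambda>j. ev i k (snd (snd w) j)) - measure_pmf.prob D {s. ev i k s}\<bar> \<le> 2 * sqrt (fst (snd w))"
        using that(1) unfolding Z_def by blast
      hence "\<bar>emp (fst w) (\<lambda>j. ev i k (snd (snd w) j)) - measure_pmf.prob D {s. ev i k s}\<bar> \<le> 2 * sqrt (fst (snd w))"
        using i that(2) by blast
      thus ?thesis unfolding E_def .
    qed
    define nz :: "nat \<times> real \<times> (nat \<Rightarrow> 'y \<times> 'y \<times> 'y \<times> 'y) \<Rightarrow> nat" where "nz = fst"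
    define ob :: "nat \<times> real \<times> (nat \<Rightarrow> 'y \<times> 'y \<times> 'y \<times> 'y) \<Rightarrow> nat \<Rightarrow> 'y \<times> 'y \<times> 'y"
      where "ob w j = snd (snd (snd w) j)" for w j
    have tA: "tracks Z (\<lambda>w. emp (nz w) (\<lambda>j. g (fst (ob w j)) i = 1)) (measure_pmf.prob D {s. g (lab_a s) i = 1}) E"
    proof (rule tr_base)
      fix w assume "w \<in> Z" from zb[OF this, of 0] show "\<bar>emp (nz w) (\<lambda>j. g (fst (ob w j)) i = 1) - measure_pmf.prob D {s. g (lab_a s) i = 1}\<bar> \<le> E w"
        by (simp add: ev_def lab_a_def nz_def ob_def)
    qed
    have tB: "tracks Z (\<lambda>w. emp (nz w) (\<lambda>j. g (fst (snd (ob w j))) i = 1)) (measure_pmf.prob D {s. g (lab_b s) i = 1}) E"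
    proof (rule tr_base)
      fix w assume "w \<in> Z" from zb[OF this, of 1] show "\<bar>emp (nz w) (\<lambda>j. g (fst (snd (ob w j))) i = 1) - measure_pmf.prob D {s. g (lab_b s) i = 1}\<bar> \<le> E w"
        by (simp add: ev_def lab_b_def nz_def ob_def)
    qed
    have tC: "tracks Z (\<lambda>w. emp (nz w) (\<lambda>j. g (snd (snd (ob w j))) i = 1)) (measure_pmf.prob D {s. g (lab_c s) i = 1}) E"
    proof (rule tr_base)
      fix w assume "w \<in> Z" from zb[OF this, of 2] show "\<bar>emp (nz w) (\<lambda>j. g (snd (snd (ob w j))) i = 1) - measure_pmf.prob D {s. g (lab_c s) i = 1}\<bar> \<le> E w"
        by (simp add: ev_def lab_c_def nz_def ob_def numeral_2_eq_2)
    qed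
    have tAB: "tracks Z (\<lambda>w. emp (nz w) (\<lambda>j. g (fst (ob w j)) i = 1 \<and> g (fst (snd (ob w j))) i = 1)) (measure_pmf.prob D {s. g (lab_a s) i = 1 \<and> g (lab_b s) i = 1}) E"
    proof (rule tr_base)
      fix w assume "w \<in> Z" from zb[OF this, of 3] show "\<bar>emp (nz w) (\<lambda>j. g (fst (ob w j)) i = 1 \<and> g (fst (snd (ob w j))) i = 1) - measure_pmf.prob D {s. g (lab_a s) i = 1 \<and> g (lab_b s) i = 1}\<bar> \<le> E w"
        by (simp add: ev_def lab_a_def lab_b_def nz_def ob_def numeral_3_eq_3)
    qed
    have tAC: "tracks Z (\<lambda>w. emp (nz w) (\<lambda>j. g (fst (ob w j)) i = 1 \<and> g (snd (snd (ob w j))) i = 1)) (measure_pmf.prob D {s. g (lab_a s) i = 1 \<and> g (lab_c s) i = 1}) E"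
    proof (rule tr_base)
      fix w assume "w \<in> Z" from zb[OF this, of 4] show "\<bar>emp (nz w) (\<lambda>j. g (fst (ob w j)) i = 1 \<and> g (snd (snd (ob w j))) i = 1) - measure_pmf.prob D {s. g (lab_a s) i = 1 \<and> g (lab_c s) i = 1}\<bar> \<le> E w"
        by (simp add: ev_def lab_a_def lab_c_def nz_def ob_def eval_nat_numeral)
    qed
    have tBC: "tracks Z (\<lambda>w. emp (nz w) (\<lambda>j. g (fst (snd (ob w j))) i = 1 \<and> g (snd (snd (ob w j))) i = 1)) (measure_pmf.prob D {s. g (lab_b s) i = 1 \<and> g (lab_c s) i = 1}) E"
    proof (rule tr_base)
      fix w assume "w \<in> Z" from zb[OF this, of 5] show "\<bar>emp (nz w) (\<lambda>j. g (fst (snd (ob w j))) i = 1 \<and> g (snd (snd (ob w j))) i = 1) - measure_pmf.prob D {s. g (lab_b s) i = 1 \<and> g (lab_c s) i = 1}\<bar> \<le> E w"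
        by (simp add: ev_def lab_b_def lab_c_def nz_def ob_def eval_nat_numeral)
    qed
    note tr1 = truth(1)[OF CI yz supp Py Pz pp, of "\<lambda>v. g v i = 1" "\<lambda>v. g v i = 1"]
    note tr2 = truth(2)[OF CI yz supp Py Pz pp, of "\<lambda>v. g v i = 1" "\<lambda>v. g v i = 1"]
    note tr3 = truth(3)[OF CI yz supp Py Pz pp, of "\<lambda>v. g v i = 1" "\<lambda>v. g v i = 1"]
    have r: "pp / (1 - pp) \<noteq> 0" using pp by simp
    have inf: "cprob D y (\<lambda>s. g (lab_a s) i = 1) - measure_pmf.prob D {s. g (lab_a s) i = 1} \<noteq> 0"
       "cprob D y (\<lambda>s. g (lab_b s) i = 1) - measure_pmf.prob D {s. g (lab_b s) i = 1} \<noteq> 0"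
       "cprob D y (\<lambda>s. g (lab_c s) i = 1) - measure_pmf.prob D {s. g (lab_c s) i = 1} \<noteq> 0"
      using informative i by auto
    note TT = triplet_tracks[where Z=Z and E=E and nz=nz and ob=ob and g=g and i=i and p'=pp, OF nn tA tB tC tAB tAC tBC r inf tr1 tr2 tr3]
    note ex3 = tr_combine3[OF TT nn]
    show "\<exists>M e. M \<ge> 0 \<and> e > 0 \<and> (\<forall>w\<in>Z. E w \<le> e \<longrightarrow> R i w (M * E w))"
      using ex3 unfolding R_def Let_def pp_def[symmetric] nz_def ob_def by assumption
  qed
  have U: "\<exists>M e. M \<ge> 0 \<and> e > 0 \<and> (\<forall>i<d. \<forall>w\<in>Z. E w \<le> e \<longrightarrow> R i w (M * E w))"
    by (rule uniform_choice[where R=R and Z=Z and E=E and d=d, OF each Rmono nn])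
  then obtain M e where Me: "M \<ge> 0" "e > 0"
    "\<forall>i<d. \<forall>w\<in>Z. E w \<le> e \<longrightarrow> R i w (M * E w)" by blast
  show ?thesis
  proof (rule exI[of _ "2 * M + 1"], intro conjI)
    show "0 < 2 * M + 1" using Me by simp
    show "\<exists>\<epsilon>0>0. \<forall>n \<delta>. 0 < n \<longrightarrow> 0 < \<delta> \<longrightarrow> ln (2 * real d ^ 2 / \<delta>) / (2 * real n) \<le> \<epsilon>0 \<longrightarrow>
      1 - \<delta> \<le> measure_pmf.prob (Pi_pmf {..<n} undefined (\<lambda>_. D)) {S. \<forall>i<d.
                 (let p' = (if y = y1 then p else 1 - p);
                      \<alpha> = cprob D y (\<lambda>s. g (lab_a s) i = 1);
                      \<beta> = cprob D y (\<lambda>s. g (lab_b s) i = 1);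
                      \<gamma> = cprob D y (\<lambda>s. g (lab_c s) i = 1);
                      sg = sgn (\<alpha> - measure_pmf.prob D {s. g (lab_a s) i = 1});
                      est = triplet_est g p' n (\<lambda>j. snd (S j)) i sg;
                      bnd = (2 * M + 1) * (ln (2 * real d ^ 2 / \<delta>) / (2 * real n)) powr (1/4)
                  in \<bar>fst est - \<alpha>\<bar> \<le> bnd \<and> \<bar>fst (snd est) - \<beta>\<bar> \<le> bnd \<and>
                     \<bar>snd (snd est) - \<gamma>\<bar> \<le> bnd)}"
    proof (rule exI[of _ "min 1 ((e/2)^2)"], intro conjI allI impI)
      show "0 < min 1 ((e/2)^2)" using Me by simp
      fix n :: nat and \<delta> :: real
      assume n: "0 < n" and \<delta>: "0 < \<delta>" and tle: "ln (2 * real d ^ 2 / \<delta>) / (2 * real n) \<le> min 1 ((e/2)^2)"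
      define t where "t = ln (2 * real d ^ 2 / \<delta>) / (2 * real n)"
      define bnd where "bnd = (2 * M + 1) * t powr (1/4)"
      have key: "1 - \<delta> \<le> measure_pmf.prob (Pi_pmf {..<n} undefined (\<lambda>_. D)) {S. \<forall>i<d. R i (n, t, S) bnd}"
      proof (cases "\<delta> \<ge> 1")
        case True
        have "0 \<le> measure_pmf.prob (Pi_pmf {..<n} undefined (\<lambda>_. D)) {S. \<forall>i<d. R i (n, t, S) bnd}"
          by (rule measure_nonneg)
        thus ?thesis using True by linarith
      next
        case False
        hence \<delta>1: "\<delta> < 1" by simp
        define w0 where "w0 = 2 * real d ^ 2 / \<delta>"
        have d1: "real d ^ 2 \<ge> 1" using d by (simp add: one_le_power)
        have w0: "w0 > 2" unfolding w0_def using \<delta> \<delta>1 d1 by (simp add: field_simps)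
        have lnw: "ln w0 > 0" using w0 by simp
        have t_eq: "t = ln w0 / (2 * real n)" by (simp add: t_def w0_def)
        have tpos: "t > 0" using lnw n by (simp add: t_eq)
        have t1: "t \<le> 1" and te: "t \<le> (e/2)^2" using tle by (simp_all add: t_def)
        have Ee: "E (n, t, S) \<le> e" for S
        proof -
          have "sqrt t \<le> sqrt ((e/2)^2)" using te by (rule real_sqrt_le_mono)
          also have "\<dots> = e/2" using Me by simp
          finally show ?thesis by (simp add: E_def)
        qed
        have bnd_ge: "M * E (n, t, S) \<le> bnd" for S
        proof -
          have "sqrt t = t powr (1/2)" using tpos by (simp add: powr_half_sqrt)
          also have "\<dots> \<le> t powr (1/4)" using tpos t1 by (intro powr_mono') auto
          finally have s: "sqrt t \<le> t powr (1/4)" .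
          have "M * E (n, t, S) = 2 * M * sqrt t" by (simp add: E_def)
          also have "\<dots> \<le> 2 * M * t powr (1/4)" using s Me by (intro mult_left_mono) auto
          also have "\<dots> \<le> (2 * M + 1) * t powr (1/4)" by (intro mult_right_mono) auto
          finally show ?thesis by (simp add: bnd_def)
        qed
        define Zs where "Zs = {S. (n, t, S) \<in> Z}"
        have sub: "Zs \<subseteq> {S. \<forall>i<d. R i (n, t, S) bnd}"
        proof
          fix S assume "S \<in> Zs"
          hence S: "(n, t, S) \<in> Z" by (simp add: Zs_def)
          have "\<forall>i<d. R i (n, t, S) bnd"
          proof (intro allI impI)
            fix i assume "i < d"
            hence "R i (n, t, S) (M * E (n, t, S))" using Me(3) S Ee[of S] by blast
            thus "R i (n, t, S) bnd" by (rule Rmono[OF _ bnd_ge])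
          qed
          thus "S \<in> {S. \<forall>i<d. R i (n, t, S) bnd}" by simp
        qed
        define Bk where "Bk = (\<lambda>(i, k). {S. 2 * sqrt t \<le> \<bar>emp n (\<lambda>j. ev i k (S j)) - measure_pmf.prob D {s. ev i k s}\<bar>})"
        have bad: "UNIV - Zs \<subseteq> \<Union> (Bk ` ({..<d} \<times> {..<6}))"
        proof
          fix S assume "S \<in> UNIV - Zs"
          hence "(n, t, S) \<notin> Z" by (simp add: Zs_def)
          then obtain i k where "i < d" "k < 6"
            "\<not> \<bar>emp n (\<lambda>j. ev i k (S j)) - measure_pmf.prob D {s. ev i k s}\<bar> \<le> 2 * sqrt t"
            using tpos unfolding Z_def by auto
          thus "S \<in> \<Union> (Bk ` ({..<d} \<times> {..<6}))"
            unfolding Bk_def by (intro UN_I[of "(i, k)"]) auto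
        qed
        have hb: "measure_pmf.prob (Pi_pmf {..<n} undefined (\<lambda>_. D)) (Bk ik) \<le> 2 * exp (- 2 * real n * (2 * sqrt t)^2)" for ik
        proof -
          obtain i k where ik: "ik = (i, k)" by (cases ik)
          show ?thesis unfolding ik Bk_def emp_def using hoeff_event[OF n, of "2 * sqrt t" undefined D "ev i k"] tpos
            by simp
        qed
        have "measure_pmf.prob (Pi_pmf {..<n} undefined (\<lambda>_. D)) (UNIV - Zs)
            \<le> measure_pmf.prob (Pi_pmf {..<n} undefined (\<lambda>_. D)) (\<Union> (Bk ` ({..<d} \<times> {..<6})))"
          using bad by (intro measure_pmf.finite_measure_mono) auto
        also have "\<dots> \<le> (\<Sum>ik\<in>{..<d} \<times> {..<6}. measure_pmf.prob (Pi_pmf {..<n} undefined (\<lambda>_. D)) (Bk ik))"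
          by (intro measure_pmf.finite_measure_subadditive_finite) auto
        also have "\<dots> \<le> (\<Sum>ik\<in>{..<d} \<times> {..<6::nat}. 2 * exp (- 2 * real n * (2 * sqrt t)^2))"
          by (intro sum_mono hb)
        also have "\<dots> = 12 * real d * exp (- 2 * real n * (2 * sqrt t)^2)" by simp
        also have "- 2 * real n * (2 * sqrt t)^2 = - (real 4 * ln w0)"
          using tpos n by (simp add: t_eq power2_eq_square field_simps)
        also have "exp (- (real 4 * ln w0)) = 1 / w0 ^ 4"
          using w0 exp_of_nat_mult[of 4 "ln w0"] by (simp add: exp_minus')
        also have "12 * real d * (1 / w0 ^ 4) \<le> \<delta>"
        proof -
          have "(2::real) ^ 3 \<le> w0 ^ 3" using w0 by (intro power_mono) auto
          hence w3: "8 \<le> w0 ^ 3" by simp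
          have dd: "real d \<le> real d ^ 2" using d by (simp add: power2_eq_square)
          have "12 * real d \<le> 16 * real d" by simp
          also have "\<dots> \<le> 2 * real d ^ 2 * 8" using dd by simp
          also have "\<dots> \<le> 2 * real d ^ 2 * w0 ^ 3" using w3 by (intro mult_left_mono) auto
          finally have "12 * real d \<le> 2 * real d ^ 2 * w0 ^ 3" .
          hence "12 * real d / w0 ^ 4 \<le> 2 * real d ^ 2 * w0 ^ 3 / w0 ^ 4"
            using w0 by (intro divide_right_mono) auto
          also have "\<dots> = 2 * real d ^ 2 / w0" using w0 by (simp add: field_simps power_numeral_reduce)
          also have "\<dots> = \<delta>" using \<delta> d1 d by (simp add: w0_def)
          finally show ?thesis by simp
        qed
        finally have badp: "measure_pmf.prob (Pi_pmf {..<n} undefined (\<lambda>_. D)) (UNIV - Zs) \<le> \<delta>" .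
        have "measure_pmf.prob (Pi_pmf {..<n} undefined (\<lambda>_. D)) (UNIV - Zs) = 1 - measure_pmf.prob (Pi_pmf {..<n} undefined (\<lambda>_. D)) Zs"
          using measure_pmf.prob_compl[of Zs "Pi_pmf {..<n} undefined (\<lambda>_. D)"] by simp
        hence "1 - \<delta> \<le> measure_pmf.prob (Pi_pmf {..<n} undefined (\<lambda>_. D)) Zs" using badp by simp
        also have "\<dots> \<le> measure_pmf.prob (Pi_pmf {..<n} undefined (\<lambda>_. D)) {S. \<forall>i<d. R i (n, t, S) bnd}"
          using sub by (intro measure_pmf.finite_measure_mono) auto
        finally show ?thesis .
      qed
      show "1 - \<delta> \<le> measure_pmf.prob (Pi_pmf {..<n} undefined (\<lambda>_. D)) {S. \<forall>i<d.
                 (let p' = (if y = y1 then p else 1 - p);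
                      \<alpha> = cprob D y (\<lambda>s. g (lab_a s) i = 1);
                      \<beta> = cprob D y (\<lambda>s. g (lab_b s) i = 1);
                      \<gamma> = cprob D y (\<lambda>s. g (lab_c s) i = 1);
                      sg = sgn (\<alpha> - measure_pmf.prob D {s. g (lab_a s) i = 1});
                      est = triplet_est g p' n (\<lambda>j. snd (S j)) i sg;
                      bnd = (2 * M + 1) * (ln (2 * real d ^ 2 / \<delta>) / (2 * real n)) powr (1/4)
                  in \<bar>fst est - \<alpha>\<bar> \<le> bnd \<and> \<bar>fst (snd est) - \<beta>\<bar> \<le> bnd \<and>
                     \<bar>snd (snd est) - \<gamma>\<bar> \<le> bnd)}"
        using key unfolding R_def bnd_def t_def by (simp only: Let_def fst_conv snd_conv)
    qed
  qed
qed

end
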